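(* Assume there is $\delta>0$ such that $\alpha\big(\{((p_i)_{i\in\mathbb N_0},h)\in\Omega: p_1=1\}\big)<1$ and $\alpha\big(\{((p_i)_{i\in\mathbb N_0},h)\in\Omega: p_0\le 1-\delta,\ h\in[\delta,1-\delta]\}\big)=1$, and assume $M<\infty$. Then for every $\varepsilon>0$ there is $\gamma>0$ such that for all $n\in\mathbb N$, $$\tfrac1n\log E_\omega[\eta_n(y)]\le\log(\Lambda+\varepsilon)\quad\text{for }\mathsf P\text{-a.e. }\omega,$$ for all $y\in n[0,\gamma]\cap\mathbb N_0$.
   Context: Let $\mathcal M$ be the set of probability measures $(p_i)_{i\in\mathbb N_0}$ on $\mathbb N_0$ (offspring distributions) and $\Omega=\mathcal M\times(0,1]$. Let $\alpha$ be a probability measure on $\Omega$. A random environment $\omega=(\omega_x)_{x\in\mathbb N_0}=(\mu_x,h_x)_{x\in\mathbb N_0}$ is an i.i.d. sequence with law $\alpha$; write $\mathsf P=\alpha^{\otimes\mathbb N_0}$. Let $m_x=\sum_{k\ge0}k\,\mu_x(\{k\})$, $M=\operatorname{ess\,sup} m_0$ and $\Lambda=\operatorname{ess\,sup}\big(m_0(1-h_0)\big)$. Given $\omega$, the branching random walk in random environment on $\mathbb N_0$ evolves in discrete time as follows: at each time step every existing particle at a site $x$ produces offspring according to $\mu_x$, independently of all other particles, and dies; then every newly produced particle independently moves from $x$ to $x+1$ with probability $h_x$ and stays at $x$ with probability $1-h_x$. The process starts with one particle at $0$. Let $\eta_n(x)$ be the number of particles at $x$ at time $n$; $E_\omega$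 denotes quenched expectation. Here $n[0,\gamma]=\{ny:y\in[0,\gamma]\}$. *)

theory Defs
  imports "HOL-Probability.Probability"
begin

text \<open>A point of the environment space: an offspring distribution given by its
  weights p = (p_i)_i (a function nat => real) together with the drift parameter h.\<close>
type_synonym site_env = "(nat \<Rightarrow> real) \<times> real"

definition Omega :: "site_env set" where
  "Omega = {(p, h). (\<forall>i. 0 \<le> p i) \<and> p sums 1 \<and> 0 < h \<and> h \<le> 1}"

definition mean_off :: "(nat \<Rightarrow> real) \<Rightarrow> ennreal" where
  "mean_off p = (\<Sum>k. ennreal (real k * p k))"

text \<open>M = ess sup m_0 and Lambda = ess sup m_0 (1 - h_0), w.r.t. alpha.\<close>
definition Mbound :: "site_env measure \<Rightarrow> ennreal" where
  "Mbound \<alpha> = esssup \<alpha> (\<lambda>w. mean_off (fst w))"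

definition Lam :: "site_env measure \<Rightarrow> ennreal" where
  "Lam \<alpha> = esssup \<alpha> (\<lambda>w. mean_off (fst w) * ennreal (1 - snd w))"

definition offspring :: "site_env \<Rightarrow> nat pmf" where
  "offspring w = embed_pmf (fst w)"

fun displace :: "real \<Rightarrow> nat \<Rightarrow> nat \<Rightarrow> nat multiset pmf" where
  "displace h x 0 = return_pmf {#}"
| "displace h x (Suc k) =
     bind_pmf (bernoulli_pmf h)
       (\<lambda>b. map_pmf (add_mset (if b then Suc x else x)) (displace h x k))"

definition particle_step :: "(nat \<Rightarrow> site_env) \<Rightarrow> nat \<Rightarrow> nat multiset pmf" where
  "particle_step \<omega> x =
     bind_pmf (offspring (\<omega> x)) (\<lambda>k. displace (snd (\<omega> x)) x k)"

text \<open>One time step of the whole population (configuration = multiset of sites);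
  all particles act independently.\<close>
definition pop_step :: "(nat \<Rightarrow> site_env) \<Rightarrow> nat multiset \<Rightarrow> nat multiset pmf" where
  "pop_step \<omega> C =
     foldr (\<lambda>x acc. bind_pmf (particle_step \<omega> x) (\<lambda>A. map_pmf ((+) A) acc))
       (sorted_list_of_multiset C) (return_pmf {#})"

primrec config :: "(nat \<Rightarrow> site_env) \<Rightarrow> nat \<Rightarrow> nat multiset pmf" where
  "config \<omega> 0 = return_pmf {#0#}"
| "config \<omega> (Suc n) = bind_pmf (config \<omega> n) (pop_step \<omega>)"

text \<open>Quenched expectation E_omega[eta_n(y)].\<close>
definition mean_eta :: "(nat \<Rightarrow> site_env) \<Rightarrow> nat \<Rightarrow> nat \<Rightarrow> ennreal" where
  "mean_eta \<omega> n y = (\<integral>\<^sup>+ C. of_nat (count C y) \<partial>measure_pmf (config \<omega> n))"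

end

theory Submission imports Defs begin

definition ed :: "real \<Rightarrow> nat \<Rightarrow> nat \<Rightarrow> ennreal" where
  "ed h x y = (if y = Suc x then ennreal h else if y = x then ennreal (1-h) else 0)"

lemma nn_bern:
  assumes "0 \<le> h" "h \<le> 1"
  shows "(\<integral>\<^sup>+b. f b \<partial>measure_pmf (bernoulli_pmf h)) = f True * ennreal h + f False * ennreal (1-h)"
  using assms by (subst nn_integral_measure_pmf_support[where A=UNIV]) (auto simp: UNIV_bool)

lemma hsplit:
  assumes "0 \<le> h" "h \<le> 1"
  shows "z * ennreal h + z * ennreal (1 - h) = (z::ennreal)"
proof -
  have "ennreal h + ennreal (1 - h) = 1"
    using assms by (simp flip: ennreal_plus)
  then show ?thesis by (metis distrib_left mult_1_right)
qed

lemma displace_mean: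
  assumes "0 \<le> h" "h \<le> 1"
  shows "(\<integral>\<^sup>+D. of_nat (count D y) \<partial>measure_pmf (displace h x k)) = of_nat k * ed h x y"
proof (induction k)
  case 0 then show ?case by simp
next
  case (Suc k)
  have "(\<integral>\<^sup>+D. of_nat (count D y) \<partial>measure_pmf (displace h x (Suc k)))
     = (\<integral>\<^sup>+b. (\<integral>\<^sup>+D. of_nat (count (add_mset (if b then Suc x else x) D) y) \<partial>measure_pmf (displace h x k)) \<partial>measure_pmf (bernoulli_pmf h))"
    by simp
  also have "\<dots> = (\<integral>\<^sup>+b. (of_nat (if y = (if b then Suc x else x) then 1 else 0) + of_nat k * ed h x y) \<partial>measure_pmf (bernoulli_pmf h))"
  proof (rule nn_integral_cong)
    fix b
    have "(\<integral>\<^sup>+D. of_nat (count (add_mset (if b then Suc x else x) D) y) \<partial>measure_pmf (displace h x k))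
      = (\<integral>\<^sup>+D. (of_nat (if y = (if b then Suc x else x) then 1 else 0) + of_nat (count D y)) \<partial>measure_pmf (displace h x k))"
      by (intro nn_integral_cong) auto
    also have "\<dots> = of_nat (if y = (if b then Suc x else x) then 1 else 0) + of_nat k * ed h x y"
      by (subst nn_integral_add) (auto simp: Suc measure_pmf.emeasure_space_1)
    finally show "(\<integral>\<^sup>+D. of_nat (count (add_mset (if b then Suc x else x) D) y) \<partial>measure_pmf (displace h x k))
      = of_nat (if y = (if b then Suc x else x) then 1 else 0) + of_nat k * ed h x y" .
  qed
  also have "\<dots> = of_nat (Suc k) * ed h x y"
    using assms by (simp add: nn_bern ed_def distrib_left distrib_right hsplit)
  finally show ?case .
qed

lemma mean_offspring:
  assumes "(p, h) \<in> Omega"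
  shows "(\<integral>\<^sup>+k. of_nat k \<partial>measure_pmf (offspring (p, h))) = mean_off p"
proof -
  have nn: "\<And>i. 0 \<le> p i" and s: "p sums 1" using assms by (auto simp: Omega_def)
  have "(\<integral>\<^sup>+x. ennreal (p x) \<partial>count_space UNIV) = (\<Sum>i. ennreal (p i))"
    by (rule nn_integral_count_space_nat)
  also have "\<dots> = ennreal (\<Sum>i. p i)"
    using nn s by (intro suminf_ennreal2) (auto simp: sums_iff)
  also have "\<dots> = 1" using s by (simp add: sums_iff)
  finally have one: "(\<integral>\<^sup>+x. ennreal (p x) \<partial>count_space UNIV) = 1" .
  have pm: "pmf (offspring (p,h)) = p"
    unfolding offspring_def using pmf_embed_pmf[OF nn one] by auto
  have "(\<integral>\<^sup>+k. of_nat k \<partial>measure_pmf (offspring (p, h)))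
      = (\<integral>\<^sup>+k. ennreal (pmf (offspring (p,h)) k) * of_nat k \<partial>count_space UNIV)"
    by (subst measure_pmf_eq_density) (simp add: nn_integral_density)
  also have "\<dots> = (\<Sum>k. ennreal (real k * p k))"
    by (subst nn_integral_count_space_nat) (simp add: pm ennreal_mult' mult.commute ennreal_of_nat_eq_real_of_nat)
  finally show ?thesis by (simp add: mean_off_def)
qed

lemma particle_mean:
  assumes "\<omega> x \<in> Omega"
  shows "(\<integral>\<^sup>+D. of_nat (count D y) \<partial>measure_pmf (particle_step \<omega> x))
     = mean_off (fst (\<omega> x)) * ed (snd (\<omega> x)) x y"
proof -
  obtain p h where w: "\<omega> x = (p, h)" by fastforce
  have h: "0 \<le> h" "h \<le> 1" using assms w by (auto simp: Omega_def)
  have "(\<integral>\<^sup>+D. of_nat (count D y) \<partial>measure_pmf (particle_step \<omega> x))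
     = (\<integral>\<^sup>+k. of_nat k * ed h x y \<partial>measure_pmf (offspring (p, h)))"
    by (simp add: particle_step_def w displace_mean[OF h])
  also have "\<dots> = (\<integral>\<^sup>+k. of_nat k \<partial>measure_pmf (offspring (p, h))) * ed h x y"
    by (rule nn_integral_multc) simp
  also have "\<dots> = mean_off p * ed h x y"
    using assms w by (simp add: mean_offspring)
  finally show ?thesis by (simp add: w)
qed

lemma foldr_mean:
  "(\<integral>\<^sup>+D. of_nat (count D y) \<partial>measure_pmf
     (foldr (\<lambda>x acc. bind_pmf (particle_step \<omega> x) (\<lambda>A. map_pmf ((+) A) acc)) xs (return_pmf {#})))
   = (\<Sum>x\<leftarrow>xs. \<integral>\<^sup>+D. of_nat (count D y) \<partial>measure_pmf (particle_step \<omega> x))"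
proof (induction xs)
  case Nil then show ?case by simp
next
  case (Cons x xs)
  let ?acc = "foldr (\<lambda>x acc. bind_pmf (particle_step \<omega> x) (\<lambda>A. map_pmf ((+) A) acc)) xs (return_pmf {#})"
  have "(\<integral>\<^sup>+D. of_nat (count D y) \<partial>measure_pmf
     (foldr (\<lambda>x acc. bind_pmf (particle_step \<omega> x) (\<lambda>A. map_pmf ((+) A) acc)) (x#xs) (return_pmf {#})))
     = (\<integral>\<^sup>+A. (\<integral>\<^sup>+B. (of_nat (count A y) + of_nat (count B y)) \<partial>measure_pmf ?acc) \<partial>measure_pmf (particle_step \<omega> x))"
    by (simp only: foldr.simps o_def nn_integral_bind_pmf nn_integral_map_pmf count_union of_nat_add)
  also have "\<dots> = (\<integral>\<^sup>+A. (of_nat (count A y) + (\<integral>\<^sup>+B. of_nat (count B y) \<partial>measure_pmf ?acc)) \<partial>measure_pmf (particle_step \<omega> x))"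
    by (intro nn_integral_cong, subst nn_integral_add) (simp_all add: measure_pmf.emeasure_space_1)
  also have "\<dots> = (\<integral>\<^sup>+A. of_nat (count A y) \<partial>measure_pmf (particle_step \<omega> x)) + (\<integral>\<^sup>+B. of_nat (count B y) \<partial>measure_pmf ?acc)"
    by (subst nn_integral_add) (simp_all add: measure_pmf.emeasure_space_1)
  finally show ?case using Cons.IH by simp
qed

lemma pop_mean:
  "(\<integral>\<^sup>+D. of_nat (count D y) \<partial>measure_pmf (pop_step \<omega> C))
   = sum_mset (image_mset (\<lambda>x. \<integral>\<^sup>+D. of_nat (count D y) \<partial>measure_pmf (particle_step \<omega> x)) C)"
proof -
  have "\<And>f. sum_list (map f (sorted_list_of_multiset C)) = sum_mset (image_mset f C)"
    by (metis mset_map mset_sorted_list_of_multiset sum_mset_sum_list)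
  then show ?thesis unfolding pop_step_def foldr_mean by blast
qed

lemma sum_mset_ind: "sum_mset (image_mset (\<lambda>x. if x = y then c else 0) C) = of_nat (count C y) * (c::ennreal)"
proof (induction C)
  case empty then show ?case by simp
next
  case (add x C) then show ?case by (simp add: distrib_right)
qed


definition sv :: "(nat \<Rightarrow> site_env) \<Rightarrow> nat \<Rightarrow> ennreal" where
  "sv \<omega> x = mean_off (fst (\<omega> x)) * ennreal (1 - snd (\<omega> x))"
definition tv :: "(nat \<Rightarrow> site_env) \<Rightarrow> nat \<Rightarrow> ennreal" where
  "tv \<omega> x = mean_off (fst (\<omega> x)) * ennreal (snd (\<omega> x))"

lemma sum_mset_ind2: "sum_mset (image_mset (\<lambda>x. (if x = a then c else 0) + (if x = b then d else 0)) C)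
   = of_nat (count C a) * (c::ennreal) + of_nat (count C b) * d"
proof (induction C)
  case empty then show ?case by simp
next
  case (add x C) then show ?case by (simp add: distrib_right algebra_simps)
qed

lemma config_rec:
  assumes "\<And>x. \<omega> x \<in> Omega"
  shows "mean_eta \<omega> (Suc n) y = sv \<omega> y * mean_eta \<omega> n y
           + (case y of 0 \<Rightarrow> 0 | Suc z \<Rightarrow> tv \<omega> z * mean_eta \<omega> n z)"
proof -
  define b where "b = (case y of 0 \<Rightarrow> Suc y | Suc z \<Rightarrow> z)"
  define d where "d = (case y of 0 \<Rightarrow> 0 | Suc z \<Rightarrow> tv \<omega> z)"
  have e: "mean_off (fst (\<omega> x)) * ed (snd (\<omega> x)) x y = (if x = y then sv \<omega> y else 0) + (if x = b then d else 0)" for x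
    by (cases y) (auto simp: ed_def b_def d_def sv_def tv_def)
  have "mean_eta \<omega> (Suc n) y = (\<integral>\<^sup>+C. sum_mset (image_mset (\<lambda>x. (if x = y then sv \<omega> y else 0) + (if x = b then d else 0)) C) \<partial>measure_pmf (config \<omega> n))"
    by (simp add: mean_eta_def pop_mean particle_mean[OF assms] e)
  also have "\<dots> = (\<integral>\<^sup>+C. of_nat (count C y) * sv \<omega> y + of_nat (count C b) * d \<partial>measure_pmf (config \<omega> n))"
    by (simp add: sum_mset_ind2)
  also have "\<dots> = (\<integral>\<^sup>+C. of_nat (count C y) \<partial>measure_pmf (config \<omega> n)) * sv \<omega> y + (\<integral>\<^sup>+C. of_nat (count C b) \<partial>measure_pmf (config \<omega> n)) * d"
    by (simp add: nn_integral_add nn_integral_multc)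
  also have "\<dots> = sv \<omega> y * mean_eta \<omega> n y + (case y of 0 \<Rightarrow> 0 | Suc z \<Rightarrow> tv \<omega> z * mean_eta \<omega> n z)"
    by (cases y) (simp_all add: mean_eta_def d_def b_def mult.commute)
  finally show ?thesis .
qed

lemma mean_eta_0: "mean_eta \<omega> 0 y = (if y = 0 then 1 else 0)"
  by (simp add: mean_eta_def)

lemma bound_main:
  assumes "\<And>x. \<omega> x \<in> Omega" "\<And>x. sv \<omega> x \<le> L" "\<And>x. tv \<omega> x \<le> Mr" "0 \<le> lam" "lam \<le> 1"
  shows "mean_eta \<omega> n y * ennreal lam ^ y \<le> (L + Mr * ennreal lam) ^ n"
proof (induction n arbitrary: y)
  case 0
  have "ennreal lam \<le> 1" using assms by simp
  then have "ennreal lam ^ y \<le> 1" by (intro power_le_one) auto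
  then show ?case by (simp add: mean_eta_0)
next
  case (Suc n)
  let ?K = "L + Mr * ennreal lam"
  show ?case
  proof (cases y)
    case 0
    have "mean_eta \<omega> (Suc n) y * ennreal lam ^ y = sv \<omega> 0 * (mean_eta \<omega> n 0 * ennreal lam ^ 0)"
      using 0 by (simp add: config_rec[OF assms(1)])
    also have "\<dots> \<le> L * ?K ^ n"
      by (intro mult_mono assms(2) Suc) auto
    also have "\<dots> \<le> ?K * ?K ^ n"
      by (intro mult_right_mono) auto
    finally show ?thesis by simp
  next
    case (Suc z)
    have "mean_eta \<omega> (Suc n) y * ennreal lam ^ y = sv \<omega> y * (mean_eta \<omega> n y * ennreal lam ^ y)
         + tv \<omega> z * ennreal lam * (mean_eta \<omega> n z * ennreal lam ^ z)"
      using Suc by (simp add: config_rec[OF assms(1)] algebra_simps)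
    also have "\<dots> \<le> L * ?K ^ n + Mr * ennreal lam * ?K ^ n"
      by (intro add_mono mult_mono assms(2,3) Suc.IH) auto
    also have "\<dots> = ?K * ?K ^ n" by (simp add: algebra_simps)
    finally show ?thesis by simp
  qed
qed


lemma real_part:
  fixes L' M' \<epsilon> :: real
  assumes "0 \<le> L'" "0 \<le> M'" "\<epsilon> > 0"
  defines "lam \<equiv> min (1/2) (\<epsilon> / (2*(M'+1)))"
  defines "c \<equiv> (L'+\<epsilon>)/(L'+\<epsilon>/2)"
  defines "\<gamma> \<equiv> ln c / ln (1/lam)"
  shows "0 < lam" "lam \<le> 1" "M' * lam \<le> \<epsilon>/2" "c > 1" "\<gamma> > 0"
    "lam powr \<gamma> = 1/c" "(L'+\<epsilon>/2) * c = L' + \<epsilon>"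
proof -
  show lp: "0 < lam" using assms by (simp add: lam_def)
  have lh0: "lam \<le> 1/2" unfolding lam_def by (rule min.cobounded1)
  then show "lam \<le> 1" by linarith
  have "M' * lam \<le> (M'+1) * lam" using lp by simp
  also have "\<dots> \<le> (M'+1) * (\<epsilon> / (2*(M'+1)))"
    using assms lp by (intro mult_left_mono) (auto simp: lam_def)
  also have "\<dots> = \<epsilon>/2" using assms by (simp add: field_simps)
  finally show "M' * lam \<le> \<epsilon>/2" .
  show c1: "c > 1" using assms by (simp add: c_def field_simps)
  have lh: "lam \<le> 1/2" by (rule lh0)
  have l1: "ln (1/lam) > 0" using lp lh by simp
  show "\<gamma> > 0" using c1 l1 by (simp add: \<gamma>_def)
  have "lam powr \<gamma> = exp (\<gamma> * ln lam)" using lp by (simp add: powr_def)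
  also have "\<gamma> * ln lam = - ln c"
    using l1 lp by (simp add: \<gamma>_def ln_div field_simps)
  also have "exp (- ln c) = 1/c" using c1 by (simp add: exp_minus inverse_eq_divide)
  finally show "lam powr \<gamma> = 1/c" .
  show "(L'+\<epsilon>/2) * c = L' + \<epsilon>" using assms by (simp add: c_def field_simps)
qed

theorem lemma1:
  fixes \<alpha> :: "site_env measure" and \<delta> :: real
  assumes "prob_space \<alpha>"
    and "sets \<alpha> = sets borel"
    and "emeasure \<alpha> Omega = 1"
    and "\<delta> > 0"
    and "measure \<alpha> {w \<in> Omega. fst w 1 = 1} < 1"
    and "emeasure \<alpha> {w \<in> Omega. fst w 0 \<le> 1 - \<delta> \<and> \<delta> \<le> snd w \<and> snd w \<le> 1 - \<delta>} = 1"
    and "Mbound \<alpha> < \<infinity>"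
  shows "\<forall>\<epsilon>>0. \<exists>\<gamma>>0. \<forall>n::nat. n \<ge> 1 \<longrightarrow>
           (AE \<omega> in PiM UNIV (\<lambda>_. \<alpha>). \<forall>y::nat. real y \<le> real n * \<gamma> \<longrightarrow>
               mean_eta \<omega> n y \<le> (Lam \<alpha> + ennreal \<epsilon>) ^ n)"
proof (intro allI impI)
  fix \<epsilon> :: real assume \<epsilon>: "\<epsilon> > 0"
  interpret P: prob_space \<alpha> by fact
  have Om: "Omega \<in> sets \<alpha>" using assms(3) emeasure_notin_sets by force
  have AE1: "AE w in \<alpha>. w \<in> Omega"
    using P.AE_in_set_eq_1[OF Om] assms(3) by (simp add: P.emeasure_eq_measure)
  have AE2: "AE w in \<alpha>. mean_off (fst w) \<le> Mbound \<alpha>" unfolding Mbound_def by (rule esssup_AE)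
  have AE3: "AE w in \<alpha>. mean_off (fst w) * ennreal (1 - snd w) \<le> Lam \<alpha>" unfolding Lam_def by (rule esssup_AE)
  have AEw: "AE w in \<alpha>. w \<in> Omega \<and> mean_off (fst w) * ennreal (1 - snd w) \<le> Lam \<alpha>
      \<and> mean_off (fst w) * ennreal (snd w) \<le> Mbound \<alpha>"
    using AE1 AE2 AE3
  proof eventually_elim
    case (elim w)
    then have "snd w \<le> 1" by (auto simp: Omega_def split: prod.splits)
    then have "mean_off (fst w) * ennreal (snd w) \<le> mean_off (fst w) * 1"
      by (intro mult_left_mono) auto
    with elim show ?case by auto
  qed
  have AEall: "AE \<omega> in PiM UNIV (\<lambda>_. \<alpha>). \<forall>x. \<omega> x \<in> Omega \<and> sv \<omega> x \<le> Lam \<alpha> \<and> tv \<omega> x \<le> Mbound \<alpha>"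
    unfolding AE_all_countable sv_def tv_def
  proof
    fix x
    show "AE \<omega> in PiM UNIV (\<lambda>_. \<alpha>). \<omega> x \<in> Omega \<and> mean_off (fst (\<omega> x)) * ennreal (1 - snd (\<omega> x)) \<le> Lam \<alpha>
      \<and> mean_off (fst (\<omega> x)) * ennreal (snd (\<omega> x)) \<le> Mbound \<alpha>"
      using AE_PiM_component[of UNIV "\<lambda>_. \<alpha>" x "\<lambda>w. w \<in> Omega \<and> mean_off (fst w) * ennreal (1 - snd w) \<le> Lam \<alpha>
      \<and> mean_off (fst w) * ennreal (snd w) \<le> Mbound \<alpha>"] AEw assms(1) by simp
  qed
  show "\<exists>\<gamma>>0. \<forall>n::nat. n \<ge> 1 \<longrightarrow>
           (AE \<omega> in PiM UNIV (\<lambda>_. \<alpha>). \<forall>y::nat. real y \<le> real n * \<gamma> \<longrightarrow>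
               mean_eta \<omega> n y \<le> (Lam \<alpha> + ennreal \<epsilon>) ^ n)"
  proof (cases "Lam \<alpha> = top")
    case True
    show ?thesis
    proof (intro exI[of _ 1] conjI allI impI)
      fix n :: nat assume "n \<ge> 1"
      then have "(Lam \<alpha> + ennreal \<epsilon>) ^ n = top" using True by (simp add: power_eq_top_ennreal)
      then show "AE \<omega> in PiM UNIV (\<lambda>_. \<alpha>). \<forall>y::nat. real y \<le> real n * 1 \<longrightarrow>
               mean_eta \<omega> n y \<le> (Lam \<alpha> + ennreal \<epsilon>) ^ n" by simp
    qed simp
  next
    case False
    obtain L' where L': "Lam \<alpha> = ennreal L'" "0 \<le> L'" using False by (cases "Lam \<alpha>") auto
    obtain M' where M': "Mbound \<alpha> = ennreal M'" "0 \<le> M'" using assms(7) by (cases "Mbound \<alpha>") auto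
    define lam where "lam = min (1/2) (\<epsilon> / (2*(M'+1)))"
    define c where "c = (L'+\<epsilon>)/(L'+\<epsilon>/2)"
    define \<gamma> where "\<gamma> = ln c / ln (1/lam)"
    note R = real_part[OF L'(2) M'(2) \<epsilon>, folded lam_def c_def, folded \<gamma>_def]
    show ?thesis
    proof (intro exI[of _ \<gamma>] conjI allI impI)
      show "\<gamma> > 0" by (rule R(5))
      fix n :: nat assume "n \<ge> 1"
      show "AE \<omega> in PiM UNIV (\<lambda>_. \<alpha>). \<forall>y::nat. real y \<le> real n * \<gamma> \<longrightarrow>
               mean_eta \<omega> n y \<le> (Lam \<alpha> + ennreal \<epsilon>) ^ n"
        using AEall
      proof eventually_elim
        case (elim \<omega>)
        show ?case
        proof (intro allI impI)
          fix y :: nat assume y: "real y \<le> real n * \<gamma>"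
          have lp: "0 < lam" "lam \<le> 1" using R by auto
          have b: "mean_eta \<omega> n y * ennreal lam ^ y \<le> (Lam \<alpha> + Mbound \<alpha> * ennreal lam) ^ n"
            using elim lp by (intro bound_main) auto
          have "(Lam \<alpha> + Mbound \<alpha> * ennreal lam) ^ n = ennreal ((L' + M' * lam) ^ n)"
          proof -
            have eq1: "Lam \<alpha> + Mbound \<alpha> * ennreal lam = ennreal (L' + M' * lam)"
            proof -
              have "ennreal (L' + M' * lam) = ennreal L' + ennreal (M' * lam)"
                using L' M' lp by (intro ennreal_plus) auto
              also have "ennreal (M' * lam) = ennreal M' * ennreal lam"
                using M' lp by (intro ennreal_mult) auto
              finally show ?thesis using L' M' by simp
            qed
            have nn: "0 \<le> L' + M' * lam" using L' M' lp by simp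
            show ?thesis unfolding eq1 using ennreal_power[OF nn] .
          qed
          also have "\<dots> \<le> ennreal ((L' + \<epsilon>/2) ^ n)"
            using R(3) L' M' lp by (intro ennreal_leI power_mono) auto
          finally have b2: "mean_eta \<omega> n y * ennreal (lam ^ y) \<le> ennreal ((L' + \<epsilon>/2) ^ n)"
            using b lp by (simp add: ennreal_power)
          define d where "d = (1/c) ^ n"
          have dpos: "d > 0" using R(4) by (simp add: d_def)
          have "d = (lam powr \<gamma>) ^ n" using R(6) by (simp add: d_def)
          also have "\<dots> = lam powr (real n * \<gamma>)"
            using lp by (simp add: powr_realpow[symmetric] powr_powr mult.commute)
          also have "\<dots> \<le> lam powr (real y)"
            using y lp by (intro powr_mono') auto
          also have "\<dots> = lam ^ y" using lp by (simp add: powr_realpow)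
          finally have dl: "d \<le> lam ^ y" .
          have b3: "mean_eta \<omega> n y * ennreal d \<le> ennreal ((L' + \<epsilon>/2) ^ n)"
            using b2 dl by (meson order_trans mult_left_mono ennreal_leI zero_le)
          show "mean_eta \<omega> n y \<le> (Lam \<alpha> + ennreal \<epsilon>) ^ n"
          proof (cases "mean_eta \<omega> n y")
            case top
            then show ?thesis using b3 dpos by (simp add: ennreal_mult_top top_unique)
          next
            case (real r)
            then have "ennreal (r * d) \<le> ennreal ((L' + \<epsilon>/2) ^ n)"
              using b3 dpos by (simp add: ennreal_mult')
            then have "r * d \<le> (L' + \<epsilon>/2) ^ n"
              using L' \<epsilon> by (subst (asm) ennreal_le_iff) auto
            then have "r \<le> (L' + \<epsilon>/2) ^ n / d" using dpos by (simp add: field_simps)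
            also have "\<dots> = ((L' + \<epsilon>/2) * c) ^ n" using R(4) by (simp add: d_def power_one_over power_mult_distrib)
            also have "\<dots> = (L' + \<epsilon>) ^ n" using R(7) by simp
            finally have "r \<le> (L' + \<epsilon>) ^ n" .
            then have "ennreal r \<le> ennreal ((L' + \<epsilon>) ^ n)" by (rule ennreal_leI)
            also have "\<dots> = (Lam \<alpha> + ennreal \<epsilon>) ^ n"
              using L' \<epsilon> by (simp add: ennreal_power flip: ennreal_plus)
            finally show ?thesis using real by simp
          qed
        qed
      qed
    qed
  qed
qed

end
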